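(* Let $W\in L^\infty$ and $\lambda=(\lambda_1,\dots,\lambda_T)\in\mathbb{R}_+^T\setminus\{0\}$. (a) If $(X_t)_{t\in\mathbb{T}}\in\mathcal{A}(W)$ solves Problem $\mathrm{P}_\lambda$, then $(\lambda_t u_t'(\tilde X_t))_{t\in\mathbb{T}}$ is an $(\mathcal{F}_t)$-martingale. (b) If Problem $\mathrm{P}_\lambda$ has a solution, then $\lambda\in(0,\infty)^T$.
   Context: Let $T\ge 1$ be an integer and $\mathbb{T}=\{1,\dots,T\}$. Let $(\Omega,\mathcal{F},(\mathcal{F}_t)_{t\in\{0,1,\dots,T\}},P)$ be a filtered probability space and $L^{\infty}=L^{\infty}(\Omega,\mathcal{F}_T,P)$. Let $(r_t)_{t\in\mathbb{T}}$ be a bounded, nonnegative, predictable process ($r_t$ is $\mathcal{F}_{t-1}$-measurable), $B_0=1$, $B_t=\prod_{k=1}^t(1+r_k)$, and for a process $(X_t)$ write $\tilde X_t=X_t/B_t$. For $W\in L^\infty$, $\mathcal{A}(W)$ is the set of $(\mathcal{F}_t)$-adapted processes $(Y_t)_{t\in\mathbb{T}}$ with $Y_t\in L^\infty$ for all $t$ and $\sum_{t\in\mathbb{T}}\tilde Y_t=W$ a.s. For each $t\in\mathbb{T}$, $u_t:\mathbb{R}\to\mathbb{R}$ is strictly concave, $C^1$, with $u_t'(x)>0$ for all $x$. For $\lambda\in\mathbb{R}_+^T\setminus\{0\}$, Problem $\mathrm{P}_\lambda$ is: maximize $\sum_{t\in\mathbb{T}}\lambda_tE[u_t(\tilde Y_t)]$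 over $(Y_t)\in\mathcal{A}(W)$; a solution is an element of $\mathcal{A}(W)$ attaining the maximum. *)

theory Defs
  imports "HOL-Analysis.Analysis" "HOL-Probability.Probability"
begin

definition strictly_concave :: "(real \<Rightarrow> real) \<Rightarrow> bool" where
  "strictly_concave f \<longleftrightarrow>
     (\<forall>x y (a::real). x \<noteq> y \<and> 0 < a \<and> a < 1 \<longrightarrow>
        a * f x + (1 - a) * f y < f (a * x + (1 - a) * y))"

text \<open>Essentially bounded random variables measurable w.r.t. a sigma algebra G
  (elements of L-infinity(Omega, G, P), represented by functions).\<close>
definition Linf :: "'a measure \<Rightarrow> 'a measure \<Rightarrow> ('a \<Rightarrow> real) set" where
  "Linf M G = {Y. Y \<in> borel_measurable G \<and> (\<exists>C. AE x in M. \<bar>Y x\<bar> \<le> C)}"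

definition bank :: "(nat \<Rightarrow> 'a \<Rightarrow> real) \<Rightarrow> nat \<Rightarrow> 'a \<Rightarrow> real" where
  "bank r t x = (\<Prod>k\<in>{1..t}. 1 + r k x)"

definition disc :: "(nat \<Rightarrow> 'a \<Rightarrow> real) \<Rightarrow> (nat \<Rightarrow> 'a \<Rightarrow> real) \<Rightarrow> nat \<Rightarrow> 'a \<Rightarrow> real" where
  "disc r X t x = X t x / bank r t x"

definition admissible ::
  "'a measure \<Rightarrow> (nat \<Rightarrow> 'a measure) \<Rightarrow> nat \<Rightarrow> (nat \<Rightarrow> 'a \<Rightarrow> real) \<Rightarrow> ('a \<Rightarrow> real)
   \<Rightarrow> (nat \<Rightarrow> 'a \<Rightarrow> real) set" where
  "admissible M F T r W =
     {Y. (\<forall>t\<in>{1..T}. Y t \<in> borel_measurable (F t) \<and> Y t \<in> Linf M (F T)) \<and>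
         (AE x in M. (\<Sum>t\<in>{1..T}. disc r Y t x) = W x)}"

definition objective ::
  "'a measure \<Rightarrow> nat \<Rightarrow> (nat \<Rightarrow> real) \<Rightarrow> (nat \<Rightarrow> real \<Rightarrow> real) \<Rightarrow> (nat \<Rightarrow> 'a \<Rightarrow> real)
   \<Rightarrow> (nat \<Rightarrow> 'a \<Rightarrow> real) \<Rightarrow> real" where
  "objective M T lam u r Y = (\<Sum>t\<in>{1..T}. lam t * (\<integral>x. u t (disc r Y t x) \<partial>M))"

definition solves_P ::
  "'a measure \<Rightarrow> (nat \<Rightarrow> 'a measure) \<Rightarrow> nat \<Rightarrow> (nat \<Rightarrow> 'a \<Rightarrow> real) \<Rightarrow> ('a \<Rightarrow> real)
   \<Rightarrow> (nat \<Rightarrow> real) \<Rightarrow> (nat \<Rightarrow> real \<Rightarrow> real) \<Rightarrow> (nat \<Rightarrow> 'a \<Rightarrow> real) \<Rightarrow> bool" where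
  "solves_P M F T r W lam u X \<longleftrightarrow>
     X \<in> admissible M F T r W \<and>
     (\<forall>Y\<in>admissible M F T r W. objective M T lam u r Y \<le> objective M T lam u r X)"

definition martingale_on ::
  "'a measure \<Rightarrow> (nat \<Rightarrow> 'a measure) \<Rightarrow> nat set \<Rightarrow> (nat \<Rightarrow> 'a \<Rightarrow> real) \<Rightarrow> bool" where
  "martingale_on M F I Z \<longleftrightarrow>
     (\<forall>t\<in>I. Z t \<in> borel_measurable (F t) \<and> integrable M (Z t)) \<and>
     (\<forall>s\<in>I. \<forall>t\<in>I. s \<le> t \<longrightarrow> (AE x in M. real_cond_exp M (F s) (Z t) x = Z s x))"

end

theory Submission
  imports Defs
begin

lemma concave_tangent:
  fixes f :: "real \<Rightarrow> real"
  assumes sc: "strictly_concave f" and d: "\<And>x. f differentiable (at x)"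
  shows "f y - f x \<ge> deriv f y * (y - x)"
proof -
  have cv: "convex_on UNIV (\<lambda>z. - f z)"
  proof (rule convex_onI)
    fix t x y :: real assume t: "0 < t" "t < 1"
    show "- f ((1 - t) *\<^sub>R x + t *\<^sub>R y) \<le> (1 - t) * - f x + t * - f y"
    proof (cases "x = y")
      case True then show ?thesis by (simp add: algebra_simps)
    next
      case False
      have "(1-t) * f x + (1 - (1-t)) * f y < f ((1-t) * x + (1 - (1-t)) * y)"
        using sc[unfolded strictly_concave_def, rule_format, of x y "1-t"] t False by auto
      then show ?thesis by (simp add: algebra_simps)
    qed
  qed simp
  have "((\<lambda>z. - f z) has_field_derivative - deriv f y) (at y within UNIV)"
    using d[of y] by (auto intro!: derivative_eq_intros simp: DERIV_deriv_iff_real_differentiable[symmetric])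
  from convex_on_imp_above_tangent[OF cv _ _ _ this, of x] show ?thesis
    by (simp add: algebra_simps)
qed

lemma dom_lim:
  fixes f :: "real \<Rightarrow> real" and g :: "'a \<Rightarrow> real"
  assumes "prob_space M" and g[measurable]: "g \<in> borel_measurable M"
    and gb: "AE x in M. \<bar>g x\<bar> \<le> C" and fc: "continuous_on UNIV f"
    and A[measurable]: "A \<in> sets M" and e: "e \<longlonglongrightarrow> 0" and e1: "\<And>n. \<bar>e n\<bar> \<le> 1"
  shows "(\<lambda>n. \<integral>x. indicator A x * f (g x + e n * indicator A x) \<partial>M)
           \<longlonglongrightarrow> (\<integral>x. indicator A x * f (g x) \<partial>M)"
proof -
  interpret prob_space M by fact
  have fm[measurable]: "f \<in> borel_measurable borel"
    using fc by (simp add: borel_measurable_continuous_onI)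
  have "compact (f ` cball 0 (\<bar>C\<bar> + 1))"
    by (rule compact_continuous_image) (auto intro: continuous_on_subset[OF fc])
  then obtain K where K: "\<And>z. z \<in> cball 0 (\<bar>C\<bar> + 1) \<Longrightarrow> \<bar>f z\<bar> \<le> K"
    using compact_imp_bounded bounded_iff by (metis image_eqI real_norm_def)
  show ?thesis
  proof (rule integral_dominated_convergence[where w="\<lambda>_. K"])
    show "AE x in M. (\<lambda>n. indicator A x * f (g x + e n * indicator A x)) \<longlonglongrightarrow> indicator A x * f (g x)"
    proof (rule AE_I2)
      fix x
      have "(\<lambda>n. g x + e n * indicator A x) \<longlonglongrightarrow> g x + 0 * indicator A x"
        by (intro tendsto_intros e)
      then have "(\<lambda>n. f (g x + e n * indicator A x)) \<longlonglongrightarrow> f (g x)"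
        using fc by (auto intro: continuous_on_tendsto_compose)
      then show "(\<lambda>n. indicator A x * f (g x + e n * indicator A x)) \<longlonglongrightarrow> indicator A x * f (g x)"
        by (intro tendsto_intros)
    qed
    fix n
    show "AE x in M. norm (indicator A x * f (g x + e n * indicator A x)) \<le> K"
      using gb
    proof eventually_elim
      case (elim x)
      have "\<bar>g x + e n * indicator A x\<bar> \<le> \<bar>C\<bar> + 1"
        using e1[of n] elim by (auto simp: indicator_def)
      then have "\<bar>f (g x + e n * indicator A x)\<bar> \<le> K" by (intro K) auto
      moreover have "0 \<le> K" using K[of 0] by auto
      ultimately show ?case by (auto simp: indicator_def)
    qed
  qed auto
qed

lemma bnd_int:
  fixes f :: "real \<Rightarrow> real" and h :: "'a \<Rightarrow> real"
  assumes "prob_space M" and h[measurable]: "h \<in> borel_measurable M"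
    and hb: "AE x in M. \<bar>h x\<bar> \<le> C" and fc: "continuous_on UNIV f"
    and A[measurable]: "A \<in> sets M"
  shows "integrable M (\<lambda>x. f (h x))" "integrable M (\<lambda>x. indicator A x * f (h x))"
proof -
  interpret prob_space M by fact
  have fm[measurable]: "f \<in> borel_measurable borel"
    using fc by (simp add: borel_measurable_continuous_onI)
  have "compact (f ` cball 0 \<bar>C\<bar>)"
    by (rule compact_continuous_image) (auto intro: continuous_on_subset[OF fc])
  then obtain K where K: "\<And>z. z \<in> cball 0 \<bar>C\<bar> \<Longrightarrow> \<bar>f z\<bar> \<le> K"
    using compact_imp_bounded bounded_iff by (metis image_eqI real_norm_def)
  have "AE x in M. norm (f (h x)) \<le> K" using hb by eventually_elim (auto intro!: K)
  then show "integrable M (\<lambda>x. f (h x))" by (intro integrable_const_bound) auto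
  then show "integrable M (\<lambda>x. indicator A x * f (h x))"
    using integrable_real_mult_indicator[OF A, of "\<lambda>x. f (h x)"] by (simp add: mult.commute)
qed

locale setting =
  fixes M :: "'a measure" and F :: "nat \<Rightarrow> 'a measure" and T :: nat
    and r :: "nat \<Rightarrow> 'a \<Rightarrow> real" and u :: "nat \<Rightarrow> real \<Rightarrow> real"
    and lam :: "nat \<Rightarrow> real" and W :: "'a \<Rightarrow> real" and X :: "nat \<Rightarrow> 'a \<Rightarrow> real"
  assumes P: "prob_space M"
    and "T \<ge> 1"
    and filt_sub: "\<And>t. t \<le> T \<Longrightarrow> subalgebra M (F t)"
    and filt_mono: "\<And>s t. s \<le> t \<Longrightarrow> t \<le> T \<Longrightarrow> sets (F s) \<subseteq> sets (F t)"
    and r_pred: "\<And>t. t \<in> {1..T} \<Longrightarrow> r t \<in> borel_measurable (F (t - 1))"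
    and r_bdd: "\<exists>C. \<forall>t\<in>{1..T}. \<forall>x\<in>space M. 0 \<le> r t x \<and> r t x \<le> C"
    and u_conc: "\<And>t. t \<in> {1..T} \<Longrightarrow> strictly_concave (u t)"
    and u_diff: "\<And>t x. t \<in> {1..T} \<Longrightarrow> u t differentiable (at x)"
    and u_C1: "\<And>t. t \<in> {1..T} \<Longrightarrow> continuous_on UNIV (deriv (u t))"
    and u_pos: "\<And>t x. t \<in> {1..T} \<Longrightarrow> deriv (u t) x > 0"
    and lam_nonneg: "\<And>t. t \<in> {1..T} \<Longrightarrow> lam t \<ge> 0"
    and sol: "solves_P M F T r W lam u X"
begin

interpretation prob_space M by (rule P)

lemma sub_sub: "s \<le> t \<Longrightarrow> t \<le> T \<Longrightarrow> subalgebra (F t) (F s)"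
  using filt_sub[of s] filt_sub[of t] filt_mono[of s t] unfolding subalgebra_def by auto

lemma meas_up: "f \<in> borel_measurable (F s) \<Longrightarrow> s \<le> t \<Longrightarrow> t \<le> T \<Longrightarrow> f \<in> borel_measurable (F t)"
  using measurable_from_subalg sub_sub by blast

lemma meas_M: "f \<in> borel_measurable (F t) \<Longrightarrow> t \<le> T \<Longrightarrow> f \<in> borel_measurable M"
  using measurable_from_subalg filt_sub by blast

lemma bank_ge1: "x \<in> space M \<Longrightarrow> k \<le> T \<Longrightarrow> 1 \<le> bank r k x"
proof -
  assume x: "x \<in> space M" and k: "k \<le> T"
  obtain C where C: "\<forall>t\<in>{1..T}. \<forall>x\<in>space M. 0 \<le> r t x \<and> r t x \<le> C" using r_bdd by blast
  have "1 \<le> 1 + r i x" if "i \<in> {1..k}" for i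
    using C that x k by auto
  then show ?thesis unfolding bank_def by (intro prod_ge_1) auto
qed

lemma bank_meas: "k \<le> T \<Longrightarrow> bank r k \<in> borel_measurable (F k)"
proof -
  assume k: "k \<le> T"
  have ri: "r i \<in> borel_measurable (F k)" if "i \<in> {1..k}" for i
    using that k by (intro meas_up[OF r_pred[of i]]) auto
  have "(\<lambda>x. \<Prod>i\<in>{1..k}. 1 + r i x) \<in> borel_measurable (F k)"
  proof (rule borel_measurable_prod)
    fix i assume "i \<in> {1..k}"
    from ri[OF this] show "(\<lambda>x. 1 + r i x) \<in> borel_measurable (F k)" by simp
  qed
  then show ?thesis unfolding bank_def[abs_def] .
qed

lemma bank_bdd: "k \<le> T \<Longrightarrow> \<exists>B. \<forall>x\<in>space M. \<bar>bank r k x\<bar> \<le> B"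
proof -
  assume k: "k \<le> T"
  obtain C where C: "\<forall>t\<in>{1..T}. \<forall>x\<in>space M. 0 \<le> r t x \<and> r t x \<le> C" using r_bdd by blast
  have "\<forall>x\<in>space M. \<bar>bank r k x\<bar> \<le> (\<Prod>i\<in>{1..k}. 1 + C)"
  proof
    fix x assume x: "x \<in> space M"
    have "bank r k x \<le> (\<Prod>i\<in>{1..k}. 1 + C)"
    proof -
      have "0 \<le> 1 + r i x \<and> 1 + r i x \<le> 1 + C" if "i \<in> {1..k}" for i
        using C that x k by auto
      then show ?thesis unfolding bank_def by (intro prod_mono) auto
    qed
    then show "\<bar>bank r k x\<bar> \<le> (\<Prod>i\<in>{1..k}. 1 + C)" using bank_ge1[OF x k] by simp
  qed
  then show ?thesis by blast
qed

lemma Xadm: "X \<in> admissible M F T r W" using sol unfolding solves_P_def by auto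

lemma X_meas: "k \<in> {1..T} \<Longrightarrow> X k \<in> borel_measurable (F k)"
  using Xadm unfolding admissible_def by auto

lemma g_meas: "k \<in> {1..T} \<Longrightarrow> disc r X k \<in> borel_measurable (F k)"
  unfolding disc_def[abs_def] using X_meas bank_meas by (intro borel_measurable_divide) auto

lemma g_measM: "k \<in> {1..T} \<Longrightarrow> disc r X k \<in> borel_measurable M"
  using g_meas meas_M by auto

lemma g_bdd: "k \<in> {1..T} \<Longrightarrow> \<exists>C. AE x in M. \<bar>disc r X k x\<bar> \<le> C"
proof -
  assume k: "k \<in> {1..T}"
  then have "X k \<in> Linf M (F T)" using Xadm unfolding admissible_def by blast
  then obtain C where C: "AE x in M. \<bar>X k x\<bar> \<le> C" unfolding Linf_def by blast
  have "AE x in M. \<bar>disc r X k x\<bar> \<le> C"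
    using C AE_space
  proof eventually_elim
    case (elim x)
    have b: "1 \<le> bank r k x" using bank_ge1 elim k by auto
    have "\<bar>disc r X k x\<bar> = \<bar>X k x\<bar> / bank r k x" using b by (simp add: disc_def abs_divide)
    also have "\<dots> \<le> \<bar>X k x\<bar>"
    proof -
      have "\<bar>X k x\<bar> * 1 \<le> \<bar>X k x\<bar> * bank r k x" using b by (intro mult_left_mono) auto
      then show ?thesis using b by (simp add: divide_le_eq)
    qed
    finally show ?case using elim by simp
  qed
  then show ?thesis by blast
qed

end

context setting begin

interpretation prob_space M by (rule P)

lemma u_cont: "k \<in> {1..T} \<Longrightarrow> continuous_on UNIV (u k)"
  by (rule differentiable_imp_continuous_on) (auto simp: differentiable_on_def u_diff)

lemma incr:
  assumes k: "k \<in> {1..T}" and A[measurable]: "A \<in> sets M"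
  shows "a * (\<integral>x. indicator A x * deriv (u k) (disc r X k x + a * indicator A x) \<partial>M)
     \<le> (\<integral>x. u k (disc r X k x + a * indicator A x) \<partial>M) - (\<integral>x. u k (disc r X k x) \<partial>M)"
proof -
  obtain C where C: "AE x in M. \<bar>disc r X k x\<bar> \<le> C" using g_bdd[OF k] by blast
  have gm[measurable]: "disc r X k \<in> borel_measurable M" using g_measM[OF k] .
  have C2: "AE x in M. \<bar>disc r X k x + a * indicator A x\<bar> \<le> C + \<bar>a\<bar>"
    using C by eventually_elim (auto simp: indicator_def)
  have i1: "integrable M (\<lambda>x. indicator A x * deriv (u k) (disc r X k x + a * indicator A x))"
    by (rule bnd_int(2)[OF P _ C2 u_C1[OF k] A]) measurable
  have i2: "integrable M (\<lambda>x. u k (disc r X k x + a * indicator A x))"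
    by (rule bnd_int(1)[OF P _ C2 u_cont[OF k] A]) measurable
  have i3: "integrable M (\<lambda>x. u k (disc r X k x))"
    by (rule bnd_int(1)[OF P _ C u_cont[OF k] A]) measurable
  have "a * (\<integral>x. indicator A x * deriv (u k) (disc r X k x + a * indicator A x) \<partial>M)
      = (\<integral>x. a * (indicator A x * deriv (u k) (disc r X k x + a * indicator A x)) \<partial>M)"
    by simp
  also have "\<dots> \<le> (\<integral>x. u k (disc r X k x + a * indicator A x) - u k (disc r X k x) \<partial>M)"
  proof (rule integral_mono)
    show "integrable M (\<lambda>x. a * (indicator A x * deriv (u k) (disc r X k x + a * indicator A x)))"
      using i1 by simp
    show "integrable M (\<lambda>x. u k (disc r X k x + a * indicator A x) - u k (disc r X k x))"
      using i2 i3 by simp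
    fix x
    have "u k (disc r X k x + a * indicator A x) - u k (disc r X k x) \<ge>
        deriv (u k) (disc r X k x + a * indicator A x) * ((disc r X k x + a * indicator A x) - disc r X k x)"
      by (rule concave_tangent[OF u_conc[OF k] u_diff[OF k]])
    then show "a * (indicator A x * deriv (u k) (disc r X k x + a * indicator A x))
         \<le> u k (disc r X k x + a * indicator A x) - u k (disc r X k x)"
      by (simp add: algebra_simps)
  qed
  also have "\<dots> = (\<integral>x. u k (disc r X k x + a * indicator A x) \<partial>M) - (\<integral>x. u k (disc r X k x) \<partial>M)"
    using i2 i3 by simp
  finally show ?thesis .
qed

end

context setting begin

interpretation prob_space M by (rule P)

lemma key:
  assumes s: "s \<in> {1..T}" and t: "t \<in> {1..T}" and st: "s \<noteq> t"
    and As: "A \<in> sets (F s)" and At: "A \<in> sets (F t)"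
  shows "lam t * (\<integral>x. indicator A x * deriv (u t) (disc r X t x) \<partial>M)
       \<le> lam s * (\<integral>x. indicator A x * deriv (u s) (disc r X s x) \<partial>M)"
proof -
  have AM[measurable]: "A \<in> sets M" using As filt_sub[of s] s unfolding subalgebra_def by auto
  define c where "c e k = (if k = t then e else if k = s then -e else (0::real))" for e k
  define Y where "Y e k x = X k x + c e k * indicator A x * bank r k x" for e k x
  have disc_Y: "disc r (Y e) k x = disc r X k x + c e k * indicator A x"
    if "x \<in> space M" "k \<le> T" for e k x
    using bank_ge1[OF that] unfolding disc_def Y_def by (simp add: field_simps)
  have cind: "(\<lambda>x. c e k * indicator A x) \<in> borel_measurable (F k)" for e k
  proof (cases "k = t \<or> k = s")
    case True
    then have "A \<in> sets (F k)" using As At by auto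
    then show ?thesis by measurable
  next
    case False then show ?thesis by (simp add: c_def)
  qed
  have Yadm: "Y e \<in> admissible M F T r W" for e
  proof -
    have meas: "Y e k \<in> borel_measurable (F k)" if k: "k \<in> {1..T}" for k
    proof -
      have "(\<lambda>x. X k x + (c e k * indicator A x) * bank r k x) \<in> borel_measurable (F k)"
        using k by (intro borel_measurable_add[OF X_meas[OF k]] borel_measurable_times[OF cind[of e k] bank_meas[of k]]) auto
      then show ?thesis unfolding Y_def[abs_def] by (simp add: mult.assoc)
    qed
    have linf: "Y e k \<in> Linf M (F T)" if k: "k \<in> {1..T}" for k
    proof -
      have "X k \<in> Linf M (F T)" using Xadm k unfolding admissible_def by blast
      then obtain C where C: "AE x in M. \<bar>X k x\<bar> \<le> C" unfolding Linf_def by blast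
      obtain B where B: "\<forall>x\<in>space M. \<bar>bank r k x\<bar> \<le> B" using bank_bdd k by auto
      have "AE x in M. \<bar>Y e k x\<bar> \<le> C + \<bar>e\<bar> * B"
        using C AE_space
      proof eventually_elim
        case (elim x)
        have "\<bar>c e k * indicator A x * bank r k x\<bar> \<le> \<bar>e\<bar> * B"
        proof -
          have "\<bar>c e k * indicator A x\<bar> \<le> \<bar>e\<bar>" by (auto simp: c_def indicator_def)
          moreover have "\<bar>bank r k x\<bar> \<le> B" using B elim by auto
          ultimately show ?thesis by (simp add: abs_mult mult_mono)
        qed
        then show ?case using elim unfolding Y_def by simp
      qed
      moreover have "Y e k \<in> borel_measurable (F T)" using meas_up[OF meas[OF k]] k by auto
      ultimately show ?thesis unfolding Linf_def by blast
    qed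
    have csum: "(\<Sum>k\<in>{1..T}. c e k * indicator A x) = 0" for x
    proof -
      have "(\<Sum>k\<in>{1..T}. c e k * indicator A x)
          = (\<Sum>k\<in>{1..T}. (if k = t then e * indicator A x else 0) + (if k = s then - e * indicator A x else 0))"
        by (rule sum.cong) (auto simp: c_def st)
      also have "\<dots> = 0" using s t by (simp add: sum.distrib)
      finally show ?thesis .
    qed
    have "AE x in M. (\<Sum>k\<in>{1..T}. disc r (Y e) k x) = W x"
    proof -
      have "AE x in M. (\<Sum>t\<in>{1..T}. disc r X t x) = W x" using Xadm unfolding admissible_def by blast
      then show ?thesis using AE_space
    proof eventually_elim
      case (elim x)
      have "(\<Sum>k\<in>{1..T}. disc r (Y e) k x) = (\<Sum>k\<in>{1..T}. disc r X k x + c e k * indicator A x)"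
        using elim by (intro sum.cong) (auto simp: disc_Y)
      also have "\<dots> = W x" using elim csum by (simp add: sum.distrib)
      finally show ?case .
    qed
    qed
    then show ?thesis using meas linf unfolding admissible_def by blast
  qed
  define I where "I k a = (\<integral>x. u k (disc r X k x + a * indicator A x) \<partial>M)" for k a
  define J where "J k a = (\<integral>x. indicator A x * deriv (u k) (disc r X k x + a * indicator A x) \<partial>M)" for k a
  have obj: "objective M T lam u r (Y e) = objective M T lam u r X
      + lam t * (I t e - I t 0) + lam s * (I s (-e) - I s 0)" for e
  proof -
    have "objective M T lam u r (Y e) - objective M T lam u r X
       = (\<Sum>k\<in>{1..T}. lam k * (I k (c e k) - I k 0))"
    proof -
      have "objective M T lam u r (Y e) = (\<Sum>k\<in>{1..T}. lam k * I k (c e k))"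
        unfolding objective_def I_def
      proof (intro sum.cong refl arg_cong2[where f="(*)"])
        fix k assume "k \<in> {1..T}"
        then show "(\<integral>x. u k (disc r (Y e) k x) \<partial>M) = (\<integral>x. u k (disc r X k x + c e k * indicator A x) \<partial>M)"
          by (intro Bochner_Integration.integral_cong[OF refl]) (auto simp: disc_Y)
      qed
      moreover have "objective M T lam u r X = (\<Sum>k\<in>{1..T}. lam k * I k 0)"
        unfolding objective_def I_def by simp
      ultimately show ?thesis by (simp add: sum_subtractf right_diff_distrib)
    qed
    also have "\<dots> = (\<Sum>k\<in>{1..T}. (if k = t then lam t * (I t e - I t 0) else 0)
                     + (if k = s then lam s * (I s (-e) - I s 0) else 0))"
      by (rule sum.cong) (auto simp: c_def st)
    also have "\<dots> = lam t * (I t e - I t 0) + lam s * (I s (-e) - I s 0)"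
      using s t by (simp add: sum.distrib)
    finally show ?thesis by simp
  qed
  have ineq: "lam t * J t e \<le> lam s * J s (-e)" if e: "e > 0" for e
  proof -
    have "objective M T lam u r (Y e) \<le> objective M T lam u r X"
      using sol Yadm unfolding solves_P_def by blast
    then have o: "lam t * (I t e - I t 0) + lam s * (I s (-e) - I s 0) \<le> 0" using obj[of e] by simp
    have "lam t * (e * J t e) \<le> lam t * (I t e - I t 0)"
      using incr[OF t AM, of e] lam_nonneg[OF t] unfolding I_def J_def by (simp add: mult_left_mono)
    moreover have "lam s * ((-e) * J s (-e)) \<le> lam s * (I s (-e) - I s 0)"
      using incr[OF s AM, of "-e"] lam_nonneg[OF s] unfolding I_def J_def by (intro mult_left_mono) auto
    ultimately have "e * (lam t * J t e - lam s * J s (-e)) \<le> 0" using o by (simp add: algebra_simps)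
    then show ?thesis using e by (simp add: mult_le_0_iff)
  qed
  have lim: "(\<lambda>n. J k (ee n)) \<longlonglongrightarrow> J k 0" if k: "k \<in> {1..T}" and ee: "ee \<longlonglongrightarrow> 0" "\<And>n. \<bar>ee n\<bar> \<le> 1" for k ee
  proof -
    obtain C where C: "AE x in M. \<bar>disc r X k x\<bar> \<le> C" using g_bdd[OF k] by blast
    show ?thesis unfolding J_def using dom_lim[OF P g_measM[OF k] C u_C1[OF k] AM ee] by simp
  qed
  have invle: "\<bar>inverse (real (Suc n))\<bar> \<le> 1" for n
    by (simp add: inverse_le_1_iff)
  have l1: "(\<lambda>n. lam t * J t (inverse (real (Suc n)))) \<longlonglongrightarrow> lam t * J t 0"
    by (intro tendsto_mult_left lim t LIMSEQ_inverse_real_of_nat invle)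
  have l2: "(\<lambda>n. lam s * J s (- inverse (real (Suc n)))) \<longlonglongrightarrow> lam s * J s 0"
  proof -
    have "(\<lambda>n. - inverse (real (Suc n))) \<longlonglongrightarrow> - 0"
      by (intro tendsto_minus LIMSEQ_inverse_real_of_nat)
    then show ?thesis using invle by (intro tendsto_mult_left lim s) auto
  qed
  have "lam t * J t 0 \<le> lam s * J s 0"
    by (rule LIMSEQ_le[OF l1 l2]) (auto intro!: ineq)
  then show ?thesis unfolding J_def by simp
qed

end

theorem lemma2p11:
  fixes M :: "'a measure" and F :: "nat \<Rightarrow> 'a measure" and T :: nat
    and r :: "nat \<Rightarrow> 'a \<Rightarrow> real" and u :: "nat \<Rightarrow> real \<Rightarrow> real"
    and lam :: "nat \<Rightarrow> real" and W :: "'a \<Rightarrow> real" and X :: "nat \<Rightarrow> 'a \<Rightarrow> real"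
  assumes "prob_space M"
    and "T \<ge> 1"
    and filt_sub: "\<And>t. t \<le> T \<Longrightarrow> subalgebra M (F t)"
    and filt_mono: "\<And>s t. s \<le> t \<Longrightarrow> t \<le> T \<Longrightarrow> sets (F s) \<subseteq> sets (F t)"
    and r_pred: "\<And>t. t \<in> {1..T} \<Longrightarrow> r t \<in> borel_measurable (F (t - 1))"
    and r_bdd: "\<exists>C. \<forall>t\<in>{1..T}. \<forall>x\<in>space M. 0 \<le> r t x \<and> r t x \<le> C"
    and u_conc: "\<And>t. t \<in> {1..T} \<Longrightarrow> strictly_concave (u t)"
    and u_diff: "\<And>t x. t \<in> {1..T} \<Longrightarrow> u t differentiable (at x)"
    and u_C1: "\<And>t. t \<in> {1..T} \<Longrightarrow> continuous_on UNIV (deriv (u t))"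
    and u_pos: "\<And>t x. t \<in> {1..T} \<Longrightarrow> deriv (u t) x > 0"
    and W: "W \<in> Linf M (F T)"
    and lam_nonneg: "\<And>t. t \<in> {1..T} \<Longrightarrow> lam t \<ge> 0"
    and lam_nonzero: "\<exists>t\<in>{1..T}. lam t \<noteq> 0"
    and sol: "solves_P M F T r W lam u X"
  shows "martingale_on M F {1..T} (\<lambda>t x. lam t * deriv (u t) (disc r X t x))
         \<and> (\<forall>t\<in>{1..T}. lam t > 0)"
proof -
  interpret S: setting M F T r u lam W X
    by (rule setting.intro[OF assms(1-10) assms(12) assms(14)])
  interpret prob_space M by fact
  define J where "J k A = (\<integral>x. indicator A x * deriv (u k) (disc r X k x) \<partial>M)" for k A
  have eq: "lam t * J t A = lam s * J s A"
    if s: "s \<in> {1..T}" and t: "t \<in> {1..T}" and As: "A \<in> sets (F s)" and At: "A \<in> sets (F t)" for s t A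
  proof (cases "s = t")
    case True then show ?thesis by simp
  next
    case False
    show ?thesis using S.key[OF s t False As At] S.key[OF t s _ At As] False unfolding J_def by simp
  qed
  have dm[measurable]: "deriv (u k) \<in> borel_measurable borel" if "k \<in> {1..T}" for k
    using u_C1[OF that] by (simp add: borel_measurable_continuous_onI)
  have Zint: "integrable M (\<lambda>x. lam k * deriv (u k) (disc r X k x))" if k: "k \<in> {1..T}" for k
  proof -
    obtain C where C: "AE x in M. \<bar>disc r X k x\<bar> \<le> C" using S.g_bdd[OF k] by blast
    have "integrable M (\<lambda>x. deriv (u k) (disc r X k x))"
      by (rule bnd_int(1)[OF assms(1) S.g_measM[OF k] C u_C1[OF k], of "space M"]) simp
    then show ?thesis by simp
  qed
  have Zmeas: "(\<lambda>x. lam k * deriv (u k) (disc r X k x)) \<in> borel_measurable (F k)" if k: "k \<in> {1..T}" for k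
    using measurable_compose[OF S.g_meas[OF k] dm[OF k]] by simp
  have JI: "(\<integral>x. indicator A x * (lam k * deriv (u k) (disc r X k x)) \<partial>M) = lam k * J k A" for k A
    unfolding J_def by (simp add: ac_simps)
  have mart: "martingale_on M F {1..T} (\<lambda>t x. lam t * deriv (u t) (disc r X t x))"
    unfolding martingale_on_def
  proof (intro conjI ballI impI)
    fix t assume t: "t \<in> {1..T}"
    show "(\<lambda>x. lam t * deriv (u t) (disc r X t x)) \<in> borel_measurable (F t)" by (rule Zmeas[OF t])
    show "integrable M (\<lambda>x. lam t * deriv (u t) (disc r X t x))" by (rule Zint[OF t])
  next
    fix s t assume s: "s \<in> {1..T}" and t: "t \<in> {1..T}" and st: "s \<le> t"
    have "finite_measure_subalgebra M (F s)"
      unfolding finite_measure_subalgebra_def finite_measure_subalgebra_axioms_def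
      using finite_measure_axioms filt_sub[of s] s by auto
    then interpret fs: finite_measure_subalgebra M "F s" .
    show "AE x in M. real_cond_exp M (F s) (\<lambda>x. lam t * deriv (u t) (disc r X t x)) x
                   = lam s * deriv (u s) (disc r X s x)"
    proof (rule fs.real_cond_exp_charact)
      fix A assume As: "A \<in> sets (F s)"
      then have At: "A \<in> sets (F t)" using filt_mono[OF st] t by auto
      show "(\<integral>x\<in>A. lam t * deriv (u t) (disc r X t x) \<partial>M) = (\<integral>x\<in>A. lam s * deriv (u s) (disc r X s x) \<partial>M)"
        unfolding set_lebesgue_integral_def using JI eq[OF s t As At] by simp
    qed (use Zint s t Zmeas in auto)
  qed
  have Jpos: "J k (space M) > 0" if k: "k \<in> {1..T}" for k
  proof -
    obtain C where C: "AE x in M. \<bar>disc r X k x\<bar> \<le> C" using S.g_bdd[OF k] by blast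
    have int: "integrable M (\<lambda>x. indicator (space M) x * deriv (u k) (disc r X k x))"
      by (rule bnd_int(2)[OF assms(1) S.g_measM[OF k] C u_C1[OF k]]) simp
    have nn: "AE x in M. 0 \<le> indicator (space M) x * deriv (u k) (disc r X k x)"
      using u_pos[OF k] by (auto intro!: AE_I2 less_imp_le simp: indicator_def)
    have "J k (space M) \<noteq> 0"
    proof
      assume "J k (space M) = 0"
      then have "AE x in M. indicator (space M) x * deriv (u k) (disc r X k x) = 0"
        using integral_nonneg_eq_0_iff_AE[OF int nn] unfolding J_def by simp
      then have "AE x in M. False" using AE_space
        by eventually_elim (metis indicator_simps(1) mult_1 u_pos[OF k] less_irrefl)
      then show False by simp
    qed
    moreover have "J k (space M) \<ge> 0" unfolding J_def by (rule integral_nonneg_AE[OF nn])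
    ultimately show ?thesis by simp
  qed
  have pos: "\<forall>t\<in>{1..T}. lam t > 0"
  proof
    fix t assume t: "t \<in> {1..T}"
    obtain t0 where t0: "t0 \<in> {1..T}" "lam t0 \<noteq> 0" using lam_nonzero by blast
    have sp: "space M \<in> sets (F k)" if "k \<in> {1..T}" for k
      using filt_sub[of k] that sets.top[of "F k"] unfolding subalgebra_def by auto
    have "lam t0 * J t0 (space M) = lam t * J t (space M)" by (rule eq[OF t t0(1) sp[OF t] sp[OF t0(1)]])
    show "lam t > 0"
    proof (rule ccontr)
      assume "\<not> lam t > 0"
      then have "lam t = 0" using lam_nonneg[OF t] by simp
      then have "lam t0 * J t0 (space M) = 0" using \<open>lam t0 * J t0 (space M) = lam t * J t (space M)\<close> by simp
      then show False using Jpos[OF t0(1)] t0(2) by simp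
    qed
  qed
  show ?thesis using mart pos by blast
qed

end
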